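(* Fix $\alpha\in(0,1)$. Let $X_1, X_2,\ldots$ be a sequence of $\{\pm1\}$-valued random variables (a persistent random walk with parameter $\alpha$) such that $\mathrm{Prob}\{X_1=+1\}=\mathrm{Prob}\{X_1=-1\}=\tfrac12$ and, for each $i\ge 2$, conditionally on $X_1,\ldots,X_{i-1}$, $X_i = X_{i-1}$ with probability $\alpha$ and $X_i=-X_{i-1}$ with probability $1-\alpha$. Let $S_0=0$, $S_k=X_1+\cdots+X_k$, and $\Delta_n = \max_{0\le j\le n} S_j - \min_{0\le j\le n} S_j + 1$. Then $$\mathrm{E}(\Delta_n)\sim \sqrt{\frac{8n\alpha}{\pi(1-\alpha)}}\quad\text{as } n\to\infty.$$
   Context: $\Delta_n$ is the number of distinct integer values among $S_0,\ldots,S_n$. *)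

theory Defs
  imports "HOL-Probability.Probability" "HOL-Library.Landau_Symbols"
begin

definition walk_sum :: "(nat \<Rightarrow> 'a \<Rightarrow> int) \<Rightarrow> nat \<Rightarrow> 'a \<Rightarrow> int" where
  "walk_sum X k \<omega> = (\<Sum>j\<in>{1..k}. X j \<omega>)"

definition walk_range :: "(nat \<Rightarrow> 'a \<Rightarrow> int) \<Rightarrow> nat \<Rightarrow> 'a \<Rightarrow> int" where
  "walk_range X n \<omega> =
     Max ((\<lambda>j. walk_sum X j \<omega>) ` {0..n}) - Min ((\<lambda>j. walk_sum X j \<omega>) ` {0..n}) + 1"

end

theory Submission
  imports Defs "HOL-Real_Asymp.Real_Asymp"
begin

unbundle no vec_syntax
unbundle fps_syntax

definition sc :: "real \<Rightarrow> real fps \<Rightarrow> real fps" where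
  "sc c f = Abs_fps (\<lambda>n. c ^ n * f $ n)"

lemma sc_nth[simp]: "sc c f $ n = c ^ n * f $ n"
  by (simp add: sc_def)

lemma sc_mult: "sc c (f * g) = sc c f * sc c g"
proof (rule fps_ext)
  fix n
  have "sc c (f * g) $ n = (\<Sum>i=0..n. c ^ n * (f $ i * g $ (n - i)))"
    by (simp add: fps_mult_nth sum_distrib_left)
  also have "\<dots> = (\<Sum>i=0..n. (c ^ i * f $ i) * (c ^ (n - i) * g $ (n - i)))"
  proof (rule sum.cong)
    fix i assume "i \<in> {0..n}"
    hence "c ^ n = c ^ i * c ^ (n - i)" by (simp add: power_add[symmetric])
    thus "c ^ n * (f $ i * g $ (n - i)) = (c ^ i * f $ i) * (c ^ (n - i) * g $ (n - i))"
      by simp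
  qed simp
  also have "\<dots> = (sc c f * sc c g) $ n" by (simp add: fps_mult_nth)
  finally show "sc c (f * g) $ n = (sc c f * sc c g) $ n" .
qed

lemma sc_add: "sc c (f + g) = sc c f + sc c g"
  by (rule fps_ext) (simp add: algebra_simps)

lemma sc_one[simp]: "sc c 1 = 1"
  by (rule fps_ext) simp

lemma sc_X[simp]: "sc c fps_X = fps_const c * fps_X"
  by (rule fps_ext) (simp add: fps_X_def)

definition bsc :: "real \<Rightarrow> real fps" where
  "bsc c = sc c (fps_binomial (1/2))"

lemma bsc_sq: "bsc c * bsc c = 1 + fps_const c * fps_X"
proof -
  have "fps_binomial (1/2::real) * fps_binomial (1/2) = fps_binomial 1"
    by (simp add: fps_binomial_add_mult[symmetric])
  also have "\<dots> = 1 + fps_X" by (simp add: fps_binomial_1)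
  finally show ?thesis unfolding bsc_def sc_mult[symmetric] by (simp add: sc_add)
qed

lemma bsc_0[simp]: "bsc c $ 0 = 1"
  by (simp add: bsc_def)

lemma fps_sqrt_unique:
  fixes f g :: "real fps"
  assumes "f * f = g * g" "f $ 0 = g $ 0" "f $ 0 \<noteq> 0"
  shows "f = g"
proof -
  have "(f - g) * (f + g) = 0" using assms(1) by (simp add: algebra_simps)
  moreover have "f + g \<noteq> 0"
  proof
    assume "f + g = 0"
    hence "(f + g) $ 0 = 0" by simp
    thus False using assms(2,3) by simp
  qed
  ultimately have "f - g = 0" by simp
  thus ?thesis by simp
qed


unbundle no vec_syntax
unbundle fps_syntax

definition gG :: "nat \<Rightarrow> real" where
  "gG m = (-1) ^ m * ((-3/2) gchoose m)"

lemma gG_Suc: "gG (Suc m) = gG m * ((real m + 3/2) / (real m + 1))"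
proof -
  have "(-3/2::real) * ((-3/2) gchoose m) = real m * ((-3/2) gchoose m) + real (Suc m) * ((-3/2) gchoose (Suc m))"
    by (rule gbinomial_mult_1)
  hence "real (Suc m) * ((-3/2) gchoose (Suc m)) = (-3/2 - real m) * ((-3/2::real) gchoose m)"
    by (simp only: left_diff_distrib)
  hence eq: "((-3/2) gchoose (Suc m)) = (- (real m + 3/2) / (real m + 1)) * ((-3/2::real) gchoose m)"
    by (simp add: field_simps)
  show ?thesis unfolding gG_def eq by (simp add: field_simps)
qed

lemma gG_0[simp]: "gG 0 = 1" by (simp add: gG_def)

lemma gG_pos: "gG m > 0"
proof (induction m)
  case (Suc m)
  have "(real m + 3/2) / (real m + 1) > 0" by (intro divide_pos_pos) auto
  with Suc show ?case unfolding gG_Suc by (rule mult_pos_pos)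
qed simp

lemma gG_mono: "m \<le> n \<Longrightarrow> gG m \<le> gG n"
proof (induction n)
  case 0 thus ?case by simp
next
  case (Suc n)
  show ?case
  proof (cases "m = Suc n")
    case False
    hence "gG m \<le> gG n" using Suc by simp
    also have "gG n \<le> gG n * ((real n + 3/2) / (real n + 1))"
      using gG_pos[of n] by (intro mult_le_cancel_left1[THEN iffD2]) (simp add: field_simps)
    finally show ?thesis by (simp add: gG_Suc)
  qed simp
qed

lemma exp_ln_powr_nat: "n > 0 \<Longrightarrow> exp (c * ln (real n)) = real n powr c"
  by (simp add: powr_def)

lemma inv_Gamma_three_halves: "inverse (Gamma (3/2 :: real)) = 2 / sqrt pi"
proof -
  have h: "(1/2) * rGamma (1/2 + 1 :: real) = rGamma (1/2)" by (rule rGamma_plus1)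
  have e: "1/2 + 1 = (3/2::real)" by simp
  have h2: "(1/2) * rGamma (3/2 :: real) = rGamma (1/2)" using h unfolding e .
  have alg: "\<And>x y::real. (1/2)*x = y \<Longrightarrow> x = 2*y" by auto
  have "rGamma (3/2 :: real) = 2 * rGamma (1/2)" using alg[OF h2] .
  moreover have "inverse (Gamma (3/2 :: real)) = rGamma (3/2)" by (simp only: rGamma_inverse_Gamma)
  moreover have "rGamma (1/2 :: real) = inverse (sqrt pi)"
    by (simp only: rGamma_inverse_Gamma Gamma_one_half_real)
  ultimately show ?thesis by (simp only: divide_inverse)
qed

lemma div_sign_aux: "(p::real) * p = 1 \<Longrightarrow> c / (p / inverse s) = p * c / s"
proof -
  assume h: "p * p = 1"
  hence "p \<noteq> 0" by auto
  thus ?thesis using h by (cases "s = 0") (auto simp: field_simps)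
qed

lemma neg1_sq: "(-1::real)^n * (-1)^n = 1" by (simp add: power_mult_distrib[symmetric])

lemma gG_asymp: "(\<lambda>n. gG n / sqrt (real n)) \<longlonglongrightarrow> 2 / sqrt pi"
proof -
  have lim: "(\<lambda>n. ((-3/2::real) gchoose n) / ((-1)^n / exp ((-3/2+1) * of_real (ln (real n))))) \<longlonglongrightarrow> inverse (Gamma (- (-3/2)))"
    by (rule gbinomial_asymptotic)
  have eq: "((-3/2::real) gchoose n) / ((-1)^n / exp ((-3/2+1) * of_real (ln (real n)))) = gG n / sqrt (real n)"
    if "n > 0" for n
  proof -
    have "exp ((-3/2+1) * ln (real n)) = real n powr (- (1/2))"
      using exp_ln_powr_nat[OF that, of "-3/2+1"] by simp
    also have "\<dots> = inverse (sqrt (real n))" by (simp add: powr_minus powr_half_sqrt)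
    finally have "exp ((-3/2+1) * ln (real n)) = inverse (sqrt (real n))" .
    thus ?thesis unfolding gG_def by (simp only: of_real_eq_id id_apply div_sign_aux[OF neg1_sq])
  qed
  have "(\<lambda>n. gG n / sqrt (real n)) \<longlonglongrightarrow> inverse (Gamma (- (-3/2::real)))"
    using lim eventually_mono[OF eventually_gt_at_top[of "0::nat"] eq] by (rule Lim_transform_eventually)
  also have "inverse (Gamma (- (-3/2::real))) = 2 / sqrt pi"
  proof -
    have "- (-3/2::real) = 3/2" by simp
    thus ?thesis using inv_Gamma_three_halves by (simp only:)
  qed
  finally show ?thesis .
qed

lemma abs_div_sign_aux: "\<bar>(p::real)\<bar> = 1 \<Longrightarrow> q > 0 \<Longrightarrow> \<bar>c / (p / q)\<bar> = \<bar>c\<bar> * q"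
  by (simp add: abs_divide abs_mult)

lemma mult_inv_bound_aux:
  fixes a q q' K :: real
  assumes "q * q' = 1" "a * q \<le> K" "q' \<ge> 0"
  shows "a \<le> K * q'"
proof -
  have "a * q * q' \<le> K * q'" using assms(2,3) by (rule mult_right_mono)
  thus ?thesis using assms(1) by (simp add: mult.assoc)
qed

lemma half_gchoose_bound: "\<exists>K. \<forall>n\<ge>1. \<bar>(1/2::real) gchoose n\<bar> \<le> K * real n powr (-3/2)"
proof -
  have lim: "(\<lambda>n. ((1/2::real) gchoose n) / ((-1)^n / exp ((1/2+1) * of_real (ln (real n))))) \<longlonglongrightarrow> inverse (Gamma (- (1/2)))"
    by (rule gbinomial_asymptotic)
  hence "Bseq (\<lambda>n. ((1/2::real) gchoose n) / ((-1)^n / exp ((1/2+1) * of_real (ln (real n)))))"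
    by (intro convergent_imp_Bseq convergentI)
  then obtain K where K: "\<And>n. norm (((1/2::real) gchoose n) / ((-1)^n / exp ((1/2+1) * of_real (ln (real n))))) \<le> K"
    unfolding Bseq_def by blast
  have "\<bar>(1/2::real) gchoose n\<bar> \<le> K * real n powr (-3/2)" if "n \<ge> 1" for n
  proof -
    have e: "exp ((1/2+1) * ln (real n)) = real n powr (3/2)" using exp_ln_powr_nat[of n "1/2+1"] that by simp
    have pos: "real n powr (3/2) > 0" using that by simp
    have s: "\<bar>(-1::real)^n\<bar> = 1" by (simp add: power_abs)
    have "\<bar>((1/2::real) gchoose n) / ((-1)^n / exp ((1/2+1) * of_real (ln (real n))))\<bar>
          = \<bar>(1/2::real) gchoose n\<bar> * real n powr (3/2)"
      unfolding of_real_eq_id id_apply e by (rule abs_div_sign_aux[OF s pos])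
    hence le: "\<bar>(1/2::real) gchoose n\<bar> * real n powr (3/2) \<le> K" using K[of n] by (simp only: real_norm_def)
    have "real n powr (3/2) * real n powr (-3/2) = 1" using that by (simp add: powr_add[symmetric])
    thus ?thesis using le by (rule mult_inv_bound_aux) simp
  qed
  thus ?thesis by blast
qed

lemma summable_half_gchoose: "summable (\<lambda>n. \<bar>(1/2::real) gchoose n\<bar>)"
proof -
  obtain K where K: "\<forall>n\<ge>1. \<bar>(1/2::real) gchoose n\<bar> \<le> K * real n powr (-3/2)"
    using half_gchoose_bound by blast
  have "summable (\<lambda>n. K * real n powr (-3/2))"
    by (intro summable_mult) (simp add: summable_real_powr_iff)
  thus ?thesis
    by (rule summable_comparison_test'[where N=1]) (use K in auto)
qed

lemma summable_bsc: "\<bar>c\<bar> \<le> 1 \<Longrightarrow> summable (\<lambda>n. norm (bsc c $ n))"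
proof -
  assume c: "\<bar>c\<bar> \<le> 1"
  show ?thesis
  proof (rule summable_comparison_test'[OF summable_half_gchoose, where N=0])
    fix n :: nat
    have "\<bar>c ^ n\<bar> \<le> 1" using c by (simp add: power_abs power_le_one)
    hence "\<bar>c ^ n\<bar> * \<bar>(1/2::real) gchoose n\<bar> \<le> 1 * \<bar>(1/2::real) gchoose n\<bar>"
      by (intro mult_right_mono) auto
    thus "norm (norm (bsc c $ n)) \<le> \<bar>(1/2::real) gchoose n\<bar>"
      by (simp add: bsc_def abs_mult)
  qed
qed

lemma summable_norm_mult_fps:
  fixes f g :: "real fps"
  assumes "summable (\<lambda>n. norm (f $ n))" "summable (\<lambda>n. norm (g $ n))"
  shows "summable (\<lambda>n. norm ((f * g) $ n))"
proof -
  have "summable (\<lambda>k. \<Sum>i\<le>k. norm (f $ i) * norm (g $ (k - i)))"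
    using summable_Cauchy_product[of "\<lambda>i. norm (f $ i)" "\<lambda>i. norm (g $ i)"] assms by simp
  thus ?thesis
  proof (rule summable_comparison_test'[where N=0])
    fix n
    have "norm ((f * g) $ n) = \<bar>\<Sum>i\<le>n. f $ i * g $ (n - i)\<bar>"
      by (simp add: fps_mult_nth atLeast0AtMost)
    also have "\<dots> \<le> (\<Sum>i\<le>n. norm (f $ i) * norm (g $ (n - i)))"
      by (rule order_trans[OF sum_abs]) (simp add: abs_mult)
    finally show "norm (norm ((f * g) $ n)) \<le> (\<Sum>i\<le>n. norm (f $ i) * norm (g $ (n - i)))" by simp
  qed
qed

lemma suminf_mult_fps:
  fixes f g :: "real fps"
  assumes "summable (\<lambda>n. norm (f $ n))" "summable (\<lambda>n. norm (g $ n))"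
  shows "(\<Sum>n. (f * g) $ n) = (\<Sum>n. f $ n) * (\<Sum>n. g $ n)"
  using Cauchy_product[OF assms] by (simp add: fps_mult_nth atLeast0AtMost)


unbundle no vec_syntax
unbundle fps_syntax

definition FF :: "real \<Rightarrow> real fps" where
  "FF r = bsc 1 * bsc (-r) * bsc r"

definition GG :: "real fps" where
  "GG = sc (-1) (fps_binomial (-3/2))"

lemma GG_nth[simp]: "GG $ n = gG n"
  by (simp add: GG_def gG_def)

lemma conj_sq: "(1 + fps_const (-r) * fps_X) * (1 + fps_const r * fps_X) = (1 - fps_const (r^2) * fps_X^2 :: real fps)"
proof -
  have "fps_const (-r) = - fps_const r" by simp
  moreover have "fps_const (r^2) = fps_const r * (fps_const r :: real fps)"
    by (simp add: power2_eq_square fps_const_mult)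
  ultimately show ?thesis by (simp add: algebra_simps power2_eq_square)
qed

lemma FF_sq: "FF r * FF r = (1 + fps_X) * (1 - fps_const (r^2) * fps_X^2)"
proof -
  have "FF r * FF r = (bsc 1 * bsc 1) * ((bsc (-r) * bsc (-r)) * (bsc r * bsc r))"
    unfolding FF_def by (simp add: ac_simps)
  also have "\<dots> = (1 + fps_X) * ((1 + fps_const (-r) * fps_X) * (1 + fps_const r * fps_X))"
    by (simp only: bsc_sq fps_const_1_eq_1 mult_1)
  also have "\<dots> = (1 + fps_X) * (1 - fps_const (r^2) * fps_X^2)" by (simp only: conj_sq)
  finally show ?thesis .
qed

lemma P_eq:
  assumes "P * P = (1 - fps_X^2) * (1 - fps_const (r^2) * fps_X^2)" "P $ 0 = 1"
  shows "P = bsc (-1) * FF r"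
proof (rule fps_sqrt_unique)
  have "(bsc (-1) * FF r) * (bsc (-1) * FF r) = (bsc (-1) * bsc (-1)) * (FF r * FF r)"
    by (simp add: ac_simps)
  also have "\<dots> = (1 - fps_X) * ((1 + fps_X) * (1 - fps_const (r^2) * fps_X^2))"
    by (simp only: bsc_sq FF_sq) simp
  also have "\<dots> = (1 - fps_X^2) * (1 - fps_const (r^2) * fps_X^2)"
    by (simp add: algebra_simps power2_eq_square)
  finally show "P * P = (bsc (-1) * FF r) * (bsc (-1) * FF r)" using assms(1) by simp
  show "P $ 0 = (bsc (-1) * FF r) $ 0" using assms(2) by (simp add: FF_def)
  show "P $ 0 \<noteq> 0" using assms(2) by simp
qed

lemma one_minus_X_sq_GG: "(1 - fps_X)^2 * GG = bsc (-1)"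
proof -
  have "fps_binomial (of_nat 2) = (1 + fps_X :: real fps)^2" by (rule fps_binomial_of_nat)
  hence b2: "fps_binomial 2 = (1 + fps_X :: real fps)^2" by simp
  have "sc (-1) ((1 + fps_X)^2) = (1 - fps_X)^2"
    by (simp add: power2_eq_square sc_mult sc_add)
  hence "(1 - fps_X)^2 * GG = sc (-1) (fps_binomial 2 * fps_binomial (-3/2))"
    by (simp add: GG_def sc_mult b2)
  also have "fps_binomial 2 * fps_binomial (-3/2) = fps_binomial (1/2 :: real)"
    by (simp add: fps_binomial_add_mult[symmetric])
  finally show ?thesis by (simp add: bsc_def)
qed

definition Hh :: "real fps" where "Hh = Abs_fps (\<lambda>_. 1)"

lemma one_minus_X_Hh: "(1 - fps_X) * Hh = 1"
  by (rule fps_ext) (simp add: Hh_def algebra_simps fps_X_mult_nth)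

lemma coeff_formula:
  fixes b r :: real and C :: "nat \<Rightarrow> real" and P :: "real fps"
  assumes P: "P * P = (1 - fps_X^2) * (1 - fps_const (r^2) * fps_X^2)" "P $ 0 = 1"
    and hyp: "(1 - fps_X)^2 * (fps_const (2*b) * Abs_fps C) = P - (1 + fps_const r * fps_X) * (1 - fps_X)"
  shows "2 * b * C n = (\<Sum>k\<le>n. FF r $ k * gG (n - k)) - (if n = 0 then 1 else 1 + r)"
proof -
  let ?R = "FF r * GG - (1 + fps_const r * fps_X) * Hh"
  have "(1 - fps_X)^2 * ?R = ((1 - fps_X)^2 * GG) * FF r - (1 + fps_const r * fps_X) * (1 - fps_X) * ((1 - fps_X) * Hh)"
    by (simp add: algebra_simps power2_eq_square)
  also have "\<dots> = P - (1 + fps_const r * fps_X) * (1 - fps_X)"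
    by (simp add: one_minus_X_sq_GG one_minus_X_Hh P_eq[OF P])
  finally have "(1 - fps_X)^2 * (fps_const (2*b) * Abs_fps C) = (1 - fps_X)^2 * ?R"
    using hyp by simp
  moreover have "(1 - fps_X :: real fps)^2 \<noteq> 0"
  proof
    assume "(1 - fps_X :: real fps)^2 = 0"
    hence "((1 - fps_X :: real fps)^2) $ 0 = 0" by simp
    thus False by (simp add: power2_eq_square)
  qed
  ultimately have eq: "fps_const (2*b) * Abs_fps C = ?R" by simp
  have "2 * b * C n = (fps_const (2*b) * Abs_fps C) $ n" by simp
  also have "\<dots> = ?R $ n" by (simp only: eq)
  also have "\<dots> = (\<Sum>k\<le>n. FF r $ k * gG (n - k)) - (if n = 0 then 1 else 1 + r)"
  proof -
    have e1: "(FF r * GG) $ n = (\<Sum>k\<le>n. FF r $ k * gG (n - k))"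
      by (simp add: fps_mult_nth atLeast0AtMost)
    have e2: "((1 + fps_const r * fps_X) * Hh) $ n = (if n = 0 then 1 else 1 + r)"
      by (simp add: distrib_right mult.assoc Hh_def)
    show ?thesis by (simp only: fps_sub_nth e1 e2)
  qed
  finally show ?thesis .
qed


unbundle no vec_syntax
unbundle fps_syntax

lemma sqrt_ratio_lim: "(\<lambda>n. sqrt (real n) / sqrt (real (n + k))) \<longlonglongrightarrow> 1"
  by real_asymp

lemma conv_limit:
  fixes f :: "nat \<Rightarrow> real"
  assumes sf: "summable (\<lambda>k. norm (f k))"
  shows "(\<lambda>n. (\<Sum>k\<le>n. f k * gG (n - k)) / sqrt (real n)) \<longlonglongrightarrow> (\<Sum>k. f k) * (2 / sqrt pi)"
proof -
  let ?L = "2 / sqrt pi"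
  have "Bseq (\<lambda>n. gG n / sqrt (real n))"
    using gG_asymp by (intro convergent_imp_Bseq convergentI)
  then obtain B where B: "\<And>n. norm (gG n / sqrt (real n)) \<le> B"
    unfolding Bseq_def by blast
  define a where "a k n = f k * (if k \<le> n then gG (n - k) / sqrt (real n) else 0)" for k n
  have bnd: "norm (a k n) \<le> norm (f k) * B" for k n
  proof (cases "k \<le> n")
    case True
    have "gG (n - k) / sqrt (real n) \<le> gG n / sqrt (real n)"
      by (intro divide_right_mono gG_mono) auto
    also have "\<dots> \<le> B" using B[of n] gG_pos[of n] by simp
    finally have "\<bar>gG (n - k) / sqrt (real n)\<bar> \<le> B"
      using gG_pos[of "n-k"] by simp
    hence "\<bar>f k\<bar> * \<bar>gG (n - k) / sqrt (real n)\<bar> \<le> \<bar>f k\<bar> * B" by (rule mult_left_mono) simp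
    thus ?thesis using True by (simp only: a_def if_True real_norm_def abs_mult)
  next
    case False
    have "0 \<le> B" using B[of 0] by simp
    thus ?thesis using False by (simp add: a_def)
  qed
  have lim: "(\<lambda>n. a k n) \<longlonglongrightarrow> f k * ?L" for k
  proof -
    have l1: "(\<lambda>n. (gG n / sqrt (real n)) * (sqrt (real n) / sqrt (real (n + k)))) \<longlonglongrightarrow> ?L * 1"
      by (intro tendsto_mult gG_asymp sqrt_ratio_lim)
    have ev2: "eventually (\<lambda>n. (gG n / sqrt (real n)) * (sqrt (real n) / sqrt (real (n + k))) = gG n / sqrt (real (n + k))) sequentially"
      using eventually_gt_at_top[of "0::nat"] by eventually_elim simp
    have "(\<lambda>n. gG n / sqrt (real (n + k))) \<longlonglongrightarrow> ?L"
      using Lim_transform_eventually[OF l1 ev2] by simp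
    hence "(\<lambda>n. (\<lambda>n. if k \<le> n then gG (n - k) / sqrt (real n) else 0) (n + k)) \<longlonglongrightarrow> ?L"
      by simp
    hence "(\<lambda>n. if k \<le> n then gG (n - k) / sqrt (real n) else 0) \<longlonglongrightarrow> ?L"
      by (rule LIMSEQ_offset)
    hence "(\<lambda>n. f k * (if k \<le> n then gG (n - k) / sqrt (real n) else 0)) \<longlonglongrightarrow> f k * ?L"
      by (intro tendsto_mult tendsto_const)
    thus ?thesis by (simp add: a_def)
  qed
  have bound_ev: "eventually (\<lambda>(k,n). norm (a k n) \<le> norm (f k) * B) (at_top \<times>\<^sub>F sequentially)"
    by (rule always_eventually) (simp only: split_beta bnd simp_thms)
  have summ: "summable (\<lambda>k. norm (f k) * B)" using sf by (rule summable_mult2)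
  have nb: "sequentially \<noteq> (bot :: nat filter)" by simp
  have T: "((\<lambda>n. suminf (\<lambda>k. a k n)) \<longlonglongrightarrow> suminf (\<lambda>k. f k * ?L))"
    using tannerys_theorem[OF lim bound_ev summ nb] by (elim conjE)
  have s1: "suminf (\<lambda>k. a k n) = (\<Sum>k\<le>n. f k * gG (n - k)) / sqrt (real n)" for n
  proof -
    have "suminf (\<lambda>k. a k n) = (\<Sum>k\<le>n. a k n)"
      by (rule suminf_finite) (auto simp: a_def)
    also have "\<dots> = (\<Sum>k\<le>n. f k * gG (n - k)) / sqrt (real n)"
      by (simp add: a_def sum_divide_distrib)
    finally show ?thesis .
  qed
  have s2: "suminf (\<lambda>k. f k * ?L) = (\<Sum>k. f k) * ?L"
    by (rule suminf_mult2[symmetric]) (rule summable_norm_cancel[OF sf])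
  show ?thesis using T unfolding s1 s2 .
qed

lemma FF_summable: "\<bar>r\<bar> \<le> 1 \<Longrightarrow> summable (\<lambda>n. norm (FF r $ n))"
  unfolding FF_def by (intro summable_norm_mult_fps summable_bsc) auto

lemma FF_sum_sq:
  assumes "\<bar>r\<bar> \<le> 1"
  shows "(\<Sum>n. FF r $ n) * (\<Sum>n. FF r $ n) = 2 * (1 - r^2)"
proof -
  have "(\<Sum>n. FF r $ n) * (\<Sum>n. FF r $ n) = (\<Sum>n. (FF r * FF r) $ n)"
    using suminf_mult_fps[OF FF_summable[OF assms] FF_summable[OF assms]] by simp
  also have "FF r * FF r = 1 + fps_X - fps_const (r^2) * fps_X^2 - fps_const (r^2) * fps_X^3"
    unfolding FF_sq by (simp add: algebra_simps power2_eq_square power3_eq_cube)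
  also have "(\<Sum>n. (1 + fps_X - fps_const (r^2) * fps_X^2 - fps_const (r^2) * fps_X^3) $ n)
      = (\<Sum>n\<in>{0,1,2,3}. (1 + fps_X - fps_const (r^2) * fps_X^2 - fps_const (r^2) * fps_X^3) $ n)"
    by (rule suminf_finite) (auto simp: fps_X_power_nth)
  also have "\<dots> = 2 * (1 - r^2)"
    by (simp add: fps_X_power_nth)
  finally show ?thesis .
qed

lemma analytic_main:
  fixes b r :: real and C :: "nat \<Rightarrow> real" and P :: "real fps"
  assumes b: "0 < b" "b < 1" and r: "r = 1 - 2 * b"
    and P: "P * P = (1 - fps_X^2) * (1 - fps_const (r^2) * fps_X^2)" "P $ 0 = 1"
    and hyp: "(1 - fps_X)^2 * (fps_const (2*b) * Abs_fps C) = P - (1 + fps_const r * fps_X) * (1 - fps_X)"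
    and Cnn: "\<And>n. C n \<ge> 0"
  shows "(\<lambda>n. C n / sqrt (real n)) \<longlonglongrightarrow> sqrt (8 * (1 - b) / (pi * b))"
proof -
  have rb: "\<bar>r\<bar> \<le> 1" using b r by auto
  define s where "s = (\<Sum>n. FF r $ n)"
  have conv: "(\<lambda>n. (\<Sum>k\<le>n. FF r $ k * gG (n - k)) / sqrt (real n)) \<longlonglongrightarrow> s * (2 / sqrt pi)"
    unfolding s_def by (rule conv_limit[OF FF_summable[OF rb]])
  have t: "(\<lambda>n. (1 + r) / sqrt (real n)) \<longlonglongrightarrow> 0"
    by real_asymp
  have lim1: "(\<lambda>n. ((\<Sum>k\<le>n. FF r $ k * gG (n - k)) / sqrt (real n) - (1 + r) / sqrt (real n)) / (2 * b))
      \<longlonglongrightarrow> (s * (2 / sqrt pi) - 0) / (2 * b)"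
    by (intro tendsto_intros conv t) (use b in auto)
  have ev: "eventually (\<lambda>n. ((\<Sum>k\<le>n. FF r $ k * gG (n - k)) / sqrt (real n) - (1 + r) / sqrt (real n)) / (2 * b)
      = C n / sqrt (real n)) sequentially"
    using eventually_gt_at_top[of "0::nat"]
  proof eventually_elim
    case (elim n)
    have "2 * b * C n = (\<Sum>k\<le>n. FF r $ k * gG (n - k)) - (1 + r)"
      using coeff_formula[OF P hyp, of n] elim by simp
    hence hS: "(\<Sum>k\<le>n. FF r $ k * gG (n - k)) = 2 * b * C n + (1 + r)" by linarith
    have "(\<Sum>k\<le>n. FF r $ k * gG (n - k)) / sqrt (real n) - (1 + r) / sqrt (real n) = 2 * b * C n / sqrt (real n)"
      unfolding hS by (simp add: add_divide_distrib)
    thus ?case using b by simp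
  qed
  have lim2: "(\<lambda>n. C n / sqrt (real n)) \<longlonglongrightarrow> s * (2 / sqrt pi) / (2 * b)"
    using Lim_transform_eventually[OF lim1 ev] by simp
  have "s * (2 / sqrt pi) / (2 * b) \<ge> 0"
    by (rule LIMSEQ_le_const[OF lim2]) (auto intro!: divide_nonneg_nonneg Cnn)
  hence s0: "s \<ge> 0" using b by (simp add: field_simps zero_le_mult_iff)
  have ss: "s * s = 2 * (1 - r^2)" unfolding s_def by (rule FF_sum_sq[OF rb])
  have "s = sqrt (2 * (1 - r^2))"
    using s0 ss by (simp add: real_sqrt_unique power2_eq_square)
  also have "2 * (1 - r^2) = 8 * b * (1 - b)" unfolding r by (simp add: power2_eq_square algebra_simps)
  finally have "s * (2 / sqrt pi) / (2 * b) = sqrt (8 * b * (1 - b)) / (b * sqrt pi)"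
    using b by (simp add: field_simps)
  also have "\<dots> = sqrt (8 * (1 - b) / (pi * b))"
  proof -
    have e8: "8 * b * (1 - b) = b^2 * (8 * (1 - b) / b)" using b by (simp add: field_simps power2_eq_square)
    have "sqrt (8 * b * (1 - b)) = sqrt (b^2) * sqrt (8 * (1 - b) / b)"
      by (simp only: e8 real_sqrt_mult)
    also have "\<dots> = b * sqrt (8 * (1 - b) / b)" using b by simp
    finally have "sqrt (8 * b * (1 - b)) / (b * sqrt pi) = sqrt (8 * (1 - b) / b) / sqrt pi"
      using b by (simp add: field_simps)
    also have "\<dots> = sqrt (8 * (1 - b) / (pi * b))"
      by (simp add: real_sqrt_divide[symmetric] field_simps)
    finally show ?thesis .
  qed
  finally show ?thesis using lim2 by simp
qed


unbundle no vec_syntax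
unbundle fps_syntax

lemma key_id:
  fixes x W A :: "'a::comm_ring_1"
  shows "(1 - (A - (1 - A)) * x^2 - 2 * (1 - A) * x * (x * (A * W + (1 - A))))^2 - (1 - x^2) * (1 - (A - (1 - A))^2 * x^2)
     = - 4 * A * (1 - A) * x^2 * (W - (x * (A * W + (1 - A))) * (x * ((1 - A) * W + A)))"
  by (simp add: algebra_simps power2_eq_square numeral_eq_Suc)

lemma key_alg:
  fixes x u w W A B :: "'a::comm_ring_1"
  assumes "B = 1 - A" "u = x * (A * W + B)" "w = x * (B * W + A)" "W = u * w"
  shows "(1 - (A - B) * x^2 - 2 * B * x * u)^2 = (1 - x^2) * (1 - (A - B)^2 * x^2)"
proof -
  have h: "W - (x * (A * W + (1 - A))) * (x * ((1 - A) * W + A)) = 0"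
    using assms(4) unfolding assms(2,3) assms(1) by simp
  have "(1 - (A - B) * x^2 - 2 * B * x * u)^2 - (1 - x^2) * (1 - (A - B)^2 * x^2) = 0"
    unfolding assms(2) unfolding assms(1) key_id h by simp
  thus ?thesis by simp
qed

definition pw :: "real \<Rightarrow> bool \<Rightarrow> bool \<Rightarrow> real" where
  "pw a d x = (if x = d then a else 1 - a)"

lemma pw_sum: "pw a d True + pw a d False = 1"
  by (simp add: pw_def)

fun V :: "real \<Rightarrow> int \<Rightarrow> bool \<Rightarrow> nat \<Rightarrow> real" where
  "V a h d 0 = (if h = 0 then 1 else 0)"
| "V a h d (Suc k) = (if h > 0 then pw a d True * V a (h + 1) True k + pw a d False * V a (h - 1) False k else 0)"

fun Sv :: "real \<Rightarrow> int \<Rightarrow> bool \<Rightarrow> nat \<Rightarrow> real" where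
  "Sv a h d 0 = (if h > 0 then 1 else 0)"
| "Sv a h d (Suc k) = (if h > 0 then pw a d True * Sv a (h + 1) True k + pw a d False * Sv a (h - 1) False k else 0)"

lemma V_0h: "V a 0 d k = (if k = 0 then 1 else 0)"
  by (cases k) auto

lemma Sv_0h: "Sv a 0 d k = 0"
  by (cases k) auto

lemma sum_V_0h: "(\<Sum>i\<le>k. V a 0 d i) = 1"
  by (induction k) (auto simp: V_0h)

lemma conserve: "h > 0 \<Longrightarrow> Sv a h d k + (\<Sum>i\<le>k. V a h d i) = 1"
proof (induction k arbitrary: h d)
  case 0 thus ?case by simp
next
  case (Suc k)
  have s: "(\<Sum>i\<le>Suc k. V a h d i) = pw a d True * (\<Sum>i\<le>k. V a (h + 1) True i) + pw a d False * (\<Sum>i\<le>k. V a (h - 1) False i)"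
    using Suc.prems by (simp only: sum.atMost_Suc_shift) (simp add: sum.distrib sum_distrib_left del: sum.atMost_Suc)
  have 1: "Sv a (h + 1) True k + (\<Sum>i\<le>k. V a (h + 1) True i) = 1" using Suc.prems by (intro Suc.IH) simp
  have 2: "Sv a (h - 1) False k + (\<Sum>i\<le>k. V a (h - 1) False i) = 1"
  proof (cases "h - 1 > 0")
    case True thus ?thesis by (rule Suc.IH)
  next
    case False
    hence "h - 1 = 0" using Suc.prems by simp
    thus ?thesis by (simp add: Sv_0h sum_V_0h)
  qed
  have "Sv a h d (Suc k) + (\<Sum>i\<le>Suc k. V a h d i)
      = pw a d True * (Sv a (h + 1) True k + (\<Sum>i\<le>k. V a (h + 1) True i))
      + pw a d False * (Sv a (h - 1) False k + (\<Sum>i\<le>k. V a (h - 1) False i))"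
    using Suc.prems unfolding s by (simp add: algebra_simps)
  also have "\<dots> = 1" unfolding 1 2 using pw_sum by simp
  finally show ?case .
qed

lemma decomp: "h \<ge> 1 \<Longrightarrow> V a (h + 1) d k = (\<Sum>i\<le>k. V a h d i * V a 1 False (k - i))"
proof (induction k arbitrary: h d)
  case 0 thus ?case by simp
next
  case (Suc k)
  have A: "V a (h + 1 + 1) True k = (\<Sum>i\<le>k. V a (h + 1) True i * V a 1 False (k - i))"
    using Suc.prems by (intro Suc.IH) simp
  have B: "V a h False k = (\<Sum>i\<le>k. V a (h - 1) False i * V a 1 False (k - i))"
  proof (cases "h \<ge> 2")
    case True
    hence "V a (h - 1 + 1) False k = (\<Sum>i\<le>k. V a (h - 1) False i * V a 1 False (k - i))"
      by (intro Suc.IH) simp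
    thus ?thesis by simp
  next
    case False
    hence h1: "h = 1" using Suc.prems by simp
    have "(\<Sum>i\<le>k. V a (h - 1) False i * V a 1 False (k - i)) = (\<Sum>i\<le>k. (if i = 0 then V a 1 False k else 0))"
      unfolding h1 by (intro sum.cong) (auto simp: V_0h)
    also have "\<dots> = V a 1 False k" by simp
    finally show ?thesis using h1 by simp
  qed
  have "(\<Sum>i\<le>Suc k. V a h d i * V a 1 False (Suc k - i))
      = (\<Sum>i\<le>k. V a h d (Suc i) * V a 1 False (k - i))"
    using Suc.prems by (simp only: sum.atMost_Suc_shift) (simp del: sum.atMost_Suc)
  also have "\<dots> = pw a d True * (\<Sum>i\<le>k. V a (h + 1) True i * V a 1 False (k - i))
       + pw a d False * (\<Sum>i\<le>k. V a (h - 1) False i * V a 1 False (k - i))"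
    using Suc.prems by (simp add: algebra_simps sum.distrib sum_distrib_left del: sum.atMost_Suc)
  also have "\<dots> = V a (h + 1) d (Suc k)"
    using Suc.prems unfolding A[symmetric] B[symmetric] by (simp add: add.assoc)
  finally show ?case ..
qed

lemma V1_rec: "V a 1 d (Suc k) = pw a d True * (\<Sum>i\<le>k. V a 1 True i * V a 1 False (k - i))
    + pw a d False * (if k = 0 then 1 else 0)"
proof -
  have "V a 1 d (Suc k) = pw a d True * V a (1 + 1) True k + pw a d False * V a 0 False k"
    by simp
  also have "V a (1 + 1) True k = (\<Sum>i\<le>k. V a 1 True i * V a 1 False (k - i))"
    by (rule decomp) simp
  finally show ?thesis by (simp add: V_0h)
qed

definition UU :: "real \<Rightarrow> real fps" where "UU a = Abs_fps (V a 1 True)"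
definition WW :: "real \<Rightarrow> real fps" where "WW a = Abs_fps (V a 1 False)"

lemma UUWW_nth: "(UU a * WW a) $ k = (\<Sum>i\<le>k. V a 1 True i * V a 1 False (k - i))"
  by (simp add: fps_mult_nth atLeast0AtMost UU_def WW_def)

lemma UU_eq: "UU a = fps_X * (fps_const a * (UU a * WW a) + fps_const (1 - a))"
proof (rule fps_ext)
  fix n show "UU a $ n = (fps_X * (fps_const a * (UU a * WW a) + fps_const (1 - a))) $ n"
  proof (cases n)
    case 0 thus ?thesis by (simp add: UU_def)
  next
    case (Suc k)
    have "(fps_X * (fps_const a * (UU a * WW a) + fps_const (1 - a))) $ n = (fps_const a * (UU a * WW a) + fps_const (1 - a)) $ k"
      using Suc by (simp add: fps_X_mult_nth)
    also have "\<dots> = a * (\<Sum>i\<le>k. V a 1 True i * V a 1 False (k - i)) + (if k = 0 then 1 - a else 0)"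
      by (simp add: UUWW_nth)
    also have "\<dots> = V a 1 True n" unfolding Suc V1_rec by (simp add: pw_def)
    finally show ?thesis by (simp add: UU_def)
  qed
qed

lemma WW_eq: "WW a = fps_X * (fps_const (1 - a) * (UU a * WW a) + fps_const a)"
proof (rule fps_ext)
  fix n show "WW a $ n = (fps_X * (fps_const (1 - a) * (UU a * WW a) + fps_const a)) $ n"
  proof (cases n)
    case 0 thus ?thesis by (simp add: WW_def)
  next
    case (Suc k)
    have "(fps_X * (fps_const (1 - a) * (UU a * WW a) + fps_const a)) $ n = (fps_const (1 - a) * (UU a * WW a) + fps_const a) $ k"
      using Suc by (simp add: fps_X_mult_nth)
    also have "\<dots> = (1 - a) * (\<Sum>i\<le>k. V a 1 True i * V a 1 False (k - i)) + (if k = 0 then a else 0)"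
      by (simp add: UUWW_nth)
    also have "\<dots> = V a 1 False n" unfolding Suc V1_rec by (simp add: pw_def)
    finally show ?thesis by (simp add: WW_def)
  qed
qed

definition PP :: "real \<Rightarrow> real fps" where
  "PP a = 1 - fps_const (2 * a - 1) * fps_X^2 - fps_const (2 * (1 - a)) * fps_X * UU a"

lemma PP_sq: "PP a * PP a = (1 - fps_X^2) * (1 - fps_const ((2 * a - 1)^2) * fps_X^2)"
proof -
  have "(1 - (fps_const a - fps_const (1 - a)) * fps_X^2 - 2 * fps_const (1 - a) * fps_X * UU a)^2
      = (1 - fps_X^2) * (1 - (fps_const a - fps_const (1 - a))^2 * fps_X^2)"
    by (rule key_alg[OF _ UU_eq WW_eq refl]) (simp only: fps_const_sub[of 1 a, symmetric] fps_const_1_eq_1)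
  moreover have "fps_const a - fps_const (1 - a) = fps_const (2 * a - 1)"
    by (simp add: algebra_simps)
  moreover have "2 * fps_const (1 - a) = fps_const (2 * (1 - a))"
    by (simp only: fps_numeral_fps_const[of "num.Bit0 num.One"] fps_const_mult)
  moreover have "(fps_const (2 * a - 1))^2 = fps_const ((2 * a - 1)^2)"
    by (simp add: fps_const_power)
  ultimately show ?thesis unfolding PP_def by (simp add: power2_eq_square)
qed

lemma PP_0: "PP a $ 0 = 1"
  by (simp add: PP_def UU_def)

definition CC :: "real \<Rightarrow> nat \<Rightarrow> real" where
  "CC a n = (\<Sum>k=1..n. Sv a 1 True (k - 1))"

lemma one_minus_X_partial: "(1 - fps_X) * Abs_fps (\<lambda>n. \<Sum>k\<le>n. f k) = Abs_fps (f :: nat \<Rightarrow> real)"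
proof (rule fps_ext)
  fix n show "((1 - fps_X) * Abs_fps (\<lambda>n. \<Sum>k\<le>n. f k)) $ n = Abs_fps f $ n"
    by (cases n) (simp_all add: algebra_simps fps_X_mult_nth)
qed

lemma final_alg:
  fixes c r x u :: "'a::comm_ring_1"
  assumes "c = 1 - r"
  shows "c * (x * (1 - u)) = (1 - r * x^2 - c * x * u) - (1 + r * x) * (1 - x)"
  unfolding assms by (simp add: algebra_simps power2_eq_square)

lemma CC_fps: "(1 - fps_X)^2 * (fps_const (2 * (1 - a)) * Abs_fps (CC a))
   = PP a - (1 + fps_const (2 * a - 1) * fps_X) * (1 - fps_X)"
proof -
  have c1: "Abs_fps (CC a) = Abs_fps (\<lambda>n. \<Sum>k\<le>n. (if k = 0 then 0 else Sv a 1 True (k - 1)))"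
  proof (rule fps_ext)
    fix n
    have "(\<Sum>k\<le>n. (if k = 0 then 0 else Sv a 1 True (k - 1))) = (\<Sum>k\<in>{1..n}. Sv a 1 True (k - 1))"
    proof -
      have "{..n} = insert 0 {1..n}" by auto
      thus ?thesis by simp
    qed
    thus "Abs_fps (CC a) $ n = Abs_fps (\<lambda>n. \<Sum>k\<le>n. (if k = 0 then 0 else Sv a 1 True (k - 1))) $ n"
      by (simp add: CC_def)
  qed
  have c2: "Abs_fps (\<lambda>k. if k = 0 then 0 else Sv a 1 True (k - 1)) = fps_X * Abs_fps (Sv a 1 True)"
    by (rule fps_ext) (simp add: fps_X_mult_nth)
  have sv: "Sv a 1 True n = 1 - (\<Sum>i\<le>n. V a 1 True i)" for n
    using conserve[of 1 a True n] by simp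
  have c3: "(1 - fps_X) * Abs_fps (Sv a 1 True) = 1 - UU a"
  proof -
    have "Abs_fps (Sv a 1 True) = Abs_fps (\<lambda>n. \<Sum>k\<le>n. (if k = 0 then 1 else 0) - V a 1 True k)"
      by (rule fps_ext) (simp add: sv sum_subtractf)
    hence "(1 - fps_X) * Abs_fps (Sv a 1 True) = Abs_fps (\<lambda>k. (if k = 0 then 1 else 0) - V a 1 True k)"
      by (simp only: one_minus_X_partial)
    also have "\<dots> = 1 - UU a" by (rule fps_ext) (simp add: UU_def)
    finally show ?thesis .
  qed
  have "(1 - fps_X)^2 * Abs_fps (CC a) = fps_X * ((1 - fps_X) * Abs_fps (Sv a 1 True))"
    unfolding c1 power2_eq_square mult.assoc one_minus_X_partial c2 by (simp add: ac_simps)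
  also have "\<dots> = fps_X * (1 - UU a)" by (simp only: c3)
  finally have e: "(1 - fps_X)^2 * Abs_fps (CC a) = fps_X * (1 - UU a)" .
  have "(1 - fps_X)^2 * (fps_const (2 * (1 - a)) * Abs_fps (CC a)) = fps_const (2 * (1 - a)) * (fps_X * (1 - UU a))"
    by (simp only: e[symmetric] ac_simps)
  also have "\<dots> = PP a - (1 + fps_const (2 * a - 1) * fps_X) * (1 - fps_X)"
  proof -
    have "(1::real fps) - fps_const (2 * a - 1) = fps_const 1 - fps_const (2 * a - 1)" by simp
    also have "\<dots> = fps_const (1 - (2 * a - 1))" by (rule fps_const_sub)
    also have "1 - (2 * a - 1) = 2 * (1 - a)" by simp
    finally have "fps_const (2 * (1 - a)) = 1 - fps_const (2 * a - 1)" by simp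
    thus ?thesis unfolding PP_def by (rule final_alg)
  qed
  finally show ?thesis .
qed

lemma Sv_nonneg: "0 \<le> a \<Longrightarrow> a \<le> 1 \<Longrightarrow> Sv a h d k \<ge> 0"
  by (induction k arbitrary: h d) (auto simp: pw_def intro!: add_nonneg_nonneg mult_nonneg_nonneg)

lemma CC_nonneg: "0 \<le> a \<Longrightarrow> a \<le> 1 \<Longrightarrow> CC a n \<ge> 0"
  unfolding CC_def by (intro sum_nonneg Sv_nonneg)


definition LL :: "nat \<Rightarrow> bool list set" where "LL n = {xs. length xs = n}"

lemma LL_0: "LL 0 = {[]}" by (auto simp: LL_def)

lemma LL_Suc: "LL (Suc n) = Cons True ` LL n \<union> Cons False ` LL n"
proof -
  have "xs \<in> Cons True ` LL n \<union> Cons False ` LL n" if "length xs = Suc n" for xs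
    using that by (cases xs) (auto simp: LL_def)
  thus ?thesis by (auto simp: LL_def)
qed

lemma LL_Suc_snoc: "LL (Suc n) = (\<lambda>xs. xs @ [True]) ` LL n \<union> (\<lambda>xs. xs @ [False]) ` LL n"
proof -
  have "xs \<in> (\<lambda>xs. xs @ [True]) ` LL n \<union> (\<lambda>xs. xs @ [False]) ` LL n" if "length xs = Suc n" for xs
  proof -
    have ne: "xs \<noteq> []" using that by auto
    have e: "xs = butlast xs @ [last xs]" using ne by simp
    have l: "butlast xs \<in> LL n" using that by (simp add: LL_def)
    show ?thesis
    proof (cases "last xs")
      case True
      hence "xs = (\<lambda>xs. xs @ [True]) (butlast xs)" using e by simp
      thus ?thesis using l by blast
    next
      case False
      hence "xs = (\<lambda>xs. xs @ [False]) (butlast xs)" using e by simp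
      thus ?thesis using l by blast
    qed
  qed
  thus ?thesis by (auto simp: LL_def)
qed

lemma finite_LL[simp]: "finite (LL n)"
  by (induction n) (simp_all add: LL_0 LL_Suc)

lemma sum_LL_Suc: "(\<Sum>xs\<in>LL (Suc n). f xs) = (\<Sum>ys\<in>LL n. f (True # ys) + f (False # ys))"
proof -
  have "(\<Sum>xs\<in>LL (Suc n). f xs) = (\<Sum>xs\<in>Cons True ` LL n. f xs) + (\<Sum>xs\<in>Cons False ` LL n. f xs)"
    unfolding LL_Suc by (rule sum.union_disjoint) auto
  also have "\<dots> = (\<Sum>ys\<in>LL n. f (True # ys)) + (\<Sum>ys\<in>LL n. f (False # ys))"
    by (simp add: sum.reindex)
  finally show ?thesis by (simp add: sum.distrib)
qed

lemma sum_LL_Suc_snoc: "(\<Sum>xs\<in>LL (Suc n). f xs) = (\<Sum>ys\<in>LL n. f (ys @ [True]) + f (ys @ [False]))"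
proof -
  have "(\<Sum>xs\<in>LL (Suc n). f xs) = (\<Sum>xs\<in>(\<lambda>xs. xs @ [True]) ` LL n. f xs) + (\<Sum>xs\<in>(\<lambda>xs. xs @ [False]) ` LL n. f xs)"
    unfolding LL_Suc_snoc by (rule sum.union_disjoint) auto
  also have "\<dots> = (\<Sum>ys\<in>LL n. f (ys @ [True])) + (\<Sum>ys\<in>LL n. f (ys @ [False]))"
    by (subst (1 2) sum.reindex) (auto simp: inj_on_def)
  finally show ?thesis by (simp add: sum.distrib)
qed

lemma sum_LL_bij:
  assumes "\<And>xs. length (g xs) = length xs" "\<And>xs. g (g xs) = xs"
  shows "(\<Sum>xs\<in>LL n. f xs) = (\<Sum>xs\<in>LL n. f (g xs))"
proof -
  have "g ` LL n = LL n"
  proof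
    show "g ` LL n \<subseteq> LL n" using assms(1) by (auto simp: LL_def)
    show "LL n \<subseteq> g ` LL n"
    proof
      fix xs assume "xs \<in> LL n"
      hence "g xs \<in> LL n" using assms(1) by (auto simp: LL_def)
      thus "xs \<in> g ` LL n" using assms(2)[of xs] by (metis image_eqI)
    qed
  qed
  moreover have "inj_on g (LL n)" by (metis assms(2) inj_on_inverseI)
  ultimately show ?thesis using sum.reindex[of g "LL n" f] by simp
qed

definition val :: "bool \<Rightarrow> int" where "val x = (if x then 1 else -1)"

definition ps :: "bool list \<Rightarrow> nat \<Rightarrow> int" where "ps xs j = sum_list (map val (take j xs))"

fun wtd :: "real \<Rightarrow> bool \<Rightarrow> bool list \<Rightarrow> real" where
  "wtd a d [] = 1"
| "wtd a d (y # ys) = pw a d y * wtd a y ys"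

fun wt :: "real \<Rightarrow> bool list \<Rightarrow> real" where
  "wt a [] = 1"
| "wt a (y # ys) = 1/2 * wtd a y ys"

lemma wtd_total: "(\<Sum>zs\<in>LL m. wtd a d zs) = 1"
proof (induction m arbitrary: d)
  case 0 thus ?case by (simp add: LL_0)
next
  case (Suc m)
  have "(\<Sum>zs\<in>LL (Suc m). wtd a d zs) = (\<Sum>ys\<in>LL m. pw a d True * wtd a True ys + pw a d False * wtd a False ys)"
    by (simp add: sum_LL_Suc)
  also have "\<dots> = pw a d True * 1 + pw a d False * 1"
    by (simp add: sum.distrib sum_distrib_left[symmetric] Suc.IH)
  finally show ?case by (simp add: pw_sum)
qed

lemma wtd_snoc: "wtd a d (zs @ [y]) = wtd a d zs * pw a (last (d # zs)) y"
  by (induction zs arbitrary: d) auto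

lemma wt_snoc: "xs \<noteq> [] \<Longrightarrow> wt a (xs @ [y]) = wt a xs * pw a (last xs) y"
  by (cases xs) (auto simp: wtd_snoc)

lemma wt_snoc_sum: "wt a (xs @ [True]) + wt a (xs @ [False]) = wt a xs"
proof (cases "xs = []")
  case True thus ?thesis by simp
next
  case False
  thus ?thesis by (simp add: wt_snoc distrib_left[symmetric] pw_sum)
qed

lemma wt_total: "(\<Sum>xs\<in>LL n. wt a xs) = 1"
  by (induction n) (simp_all add: LL_0 sum_LL_Suc_snoc wt_snoc_sum)

lemma marginal:
  assumes "k \<le> n"
  shows "(\<Sum>xs\<in>LL n. wt a xs * f (take k xs)) = (\<Sum>ys\<in>LL k. wt a ys * f ys)"
  using assms
proof (induction n)
  case 0 thus ?case by (simp add: LL_0)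
next
  case (Suc n)
  show ?case
  proof (cases "k = Suc n")
    case True
    have "(\<Sum>xs\<in>LL (Suc n). wt a xs * f (take k xs)) = (\<Sum>xs\<in>LL (Suc n). wt a xs * f xs)"
      by (intro sum.cong) (auto simp: LL_def True)
    thus ?thesis using True by simp
  next
    case False
    hence k: "k \<le> n" using Suc.prems by simp
    have "(\<Sum>xs\<in>LL (Suc n). wt a xs * f (take k xs))
        = (\<Sum>ys\<in>LL n. (wt a (ys @ [True]) + wt a (ys @ [False])) * f (take k ys))"
      unfolding sum_LL_Suc_snoc
      by (intro sum.cong) (auto simp: LL_def k algebra_simps)
    also have "\<dots> = (\<Sum>ys\<in>LL n. wt a ys * f (take k ys))" by (simp add: wt_snoc_sum)
    finally show ?thesis using Suc.IH[OF k] by simp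
  qed
qed

lemma wt_Cons_Cons: "wt a (x # y # ys) = pw a x y * wt a (y # ys)"
  by simp

lemma pw_sym: "pw a x y = pw a y x" by (simp add: pw_def)

lemma wt_rev: "wt a (rev xs) = wt a xs"
proof (induction xs rule: induct_list012)
  case 1 thus ?case by simp
next
  case (2 x) thus ?case by simp
next
  case (3 x y ys)
  have "wt a (rev (x # y # ys)) = wt a (rev (y # ys) @ [x])" by simp
  also have "\<dots> = wt a (rev (y # ys)) * pw a (last (rev (y # ys))) x"
    by (rule wt_snoc) simp
  also have "\<dots> = wt a (y # ys) * pw a y x" using 3(2) by simp
  also have "\<dots> = wt a (x # y # ys)" by (simp add: pw_sym)
  finally show ?case .
qed


definition psums :: "bool list \<Rightarrow> int set" where
  "psums xs = (\<lambda>j. ps xs j) ` {0..length xs}"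

definition newk :: "bool list \<Rightarrow> bool" where
  "newk xs = (ps xs (length xs) \<notin> (\<lambda>j. ps xs j) ` {0..<length xs})"

lemma ps_0[simp]: "ps xs 0 = 0" by (simp add: ps_def)

lemma ps_append_le: "j \<le> length xs \<Longrightarrow> ps (xs @ ys) j = ps xs j"
  by (simp add: ps_def)

lemma ps_snoc_full: "ps (xs @ [y]) (Suc (length xs)) = ps xs (length xs) + val y"
  by (simp add: ps_def)

lemma ps_Suc: "j < length xs \<Longrightarrow> ps xs (Suc j) = ps xs j + val (xs ! j)"
  by (simp add: ps_def take_Suc_conv_app_nth)

lemma ps_Cons_Suc: "ps (y # zs) (Suc j) = val y + ps zs j"
  by (simp add: ps_def)

lemma val_cases: "val y = 1 \<or> val y = -1" by (simp add: val_def)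

lemma psums_snoc: "psums (xs @ [y]) = insert (ps xs (length xs) + val y) (psums xs)"
proof -
  have "{0..length (xs @ [y])} = insert (Suc (length xs)) {0..length xs}" by auto
  hence "psums (xs @ [y]) = insert (ps (xs @ [y]) (Suc (length xs))) ((\<lambda>j. ps (xs @ [y]) j) ` {0..length xs})"
    unfolding psums_def by simp
  also have "(\<lambda>j. ps (xs @ [y]) j) ` {0..length xs} = psums xs"
    unfolding psums_def by (intro image_cong) (auto simp: ps_append_le)
  finally show ?thesis by (simp add: ps_snoc_full)
qed

lemma ps_in_psums: "j \<le> length xs \<Longrightarrow> ps xs j \<in> psums xs"
  by (simp add: psums_def)

lemma psums_interval: "\<exists>m M. psums xs = {m..M} \<and> m \<le> M"
proof (induction xs rule: rev_induct)
  case Nil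
  have "psums [] = {0..0}" by (simp add: psums_def)
  thus ?case by blast
next
  case (snoc y xs)
  then obtain m M where mM: "psums xs = {m..M}" "m \<le> M" by blast
  define p where "p = ps xs (length xs)"
  have "p \<in> {m..M}" unfolding p_def mM(1)[symmetric] by (rule ps_in_psums) simp
  hence pr: "m \<le> p" "p \<le> M" by auto
  define v where "v = p + val y"
  have v: "m - 1 \<le> v" "v \<le> M + 1" using pr val_cases[of y] by (auto simp: v_def)
  have "insert v {m..M} = {min m v..max M v}"
    using v mM(2) by auto
  moreover have "psums (xs @ [y]) = insert v {m..M}"
    unfolding psums_snoc mM(1) p_def v_def ..
  ultimately have "psums (xs @ [y]) = {min m v..max M v}" by simp
  moreover have "min m v \<le> max M v" using mM(2) by simp
  ultimately show ?case by blast
qed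

lemma range_card: "Max (psums xs) - Min (psums xs) + 1 = int (card (psums xs))"
proof -
  obtain m M where mM: "psums xs = {m..M}" "m \<le> M" using psums_interval by blast
  have "Max {m..M} = M" using mM(2) by (intro Max_eqI) auto
  moreover have "Min {m..M} = m" using mM(2) by (intro Min_eqI) auto
  ultimately show ?thesis using mM by simp
qed

lemma finite_psums[simp]: "finite (psums xs)" by (simp add: psums_def)

lemma newk_snoc: "newk (xs @ [y]) \<longleftrightarrow> ps xs (length xs) + val y \<notin> psums xs"
proof -
  have "(\<lambda>j. ps (xs @ [y]) j) ` {0..<length (xs @ [y])} = psums xs"
  proof -
    have "{0..<length (xs @ [y])} = {0..length xs}" by auto
    thus ?thesis unfolding psums_def by (auto simp: ps_append_le intro!: image_cong)
  qed
  thus ?thesis unfolding newk_def by (simp add: ps_snoc_full)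
qed

lemma card_psums_snoc: "card (psums (xs @ [y])) = card (psums xs) + (if newk (xs @ [y]) then 1 else 0)"
  unfolding psums_snoc newk_snoc by (simp add: card_insert_if)

lemma card_formula: "real (card (psums xs)) = 1 + (\<Sum>k\<in>{1..length xs}. (if newk (take k xs) then 1 else 0))"
proof (induction xs rule: rev_induct)
  case Nil thus ?case by (simp add: psums_def)
next
  case (snoc y xs)
  have s: "{1..length (xs @ [y])} = insert (Suc (length xs)) {1..length xs}" by auto
  have "(\<Sum>k\<in>{1..length (xs @ [y])}. (if newk (take k (xs @ [y])) then 1 else 0 :: real))
      = (if newk (xs @ [y]) then 1 else 0) + (\<Sum>k\<in>{1..length xs}. (if newk (take k xs) then 1 else 0))"
    unfolding s by (simp add: sum.insert)
  thus ?case using snoc by (simp add: card_psums_snoc)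
qed

lemma expected_card:
  "(\<Sum>xs\<in>LL n. wt a xs * real (card (psums xs))) = 1 + (\<Sum>k\<in>{1..n}. \<Sum>ys\<in>LL k. wt a ys * (if newk ys then 1 else 0))"
proof -
  have "(\<Sum>xs\<in>LL n. wt a xs * real (card (psums xs)))
      = (\<Sum>xs\<in>LL n. wt a xs) + (\<Sum>xs\<in>LL n. \<Sum>k\<in>{1..n}. wt a xs * (if newk (take k xs) then 1 else 0))"
    by (simp add: card_formula distrib_left sum.distrib sum_distrib_left LL_def)
  also have "\<dots> = 1 + (\<Sum>k\<in>{1..n}. \<Sum>xs\<in>LL n. wt a xs * (if newk (take k xs) then 1 else 0))"
    by (simp add: wt_total sum.swap[of _ "LL n"])
  also have "\<dots> = 1 + (\<Sum>k\<in>{1..n}. \<Sum>ys\<in>LL k. wt a ys * (if newk ys then 1 else 0))"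
    by (intro arg_cong2[where f="(+)"] refl sum.cong marginal) auto
  finally show ?thesis .
qed

lemma sum_list_val_rev: "sum_list (map val (rev l)) = sum_list (map val l)"
  by (simp add: rev_map[symmetric] sum_list_rev)

lemma ps_rev: "i \<le> length ys \<Longrightarrow> ps (rev ys) (length ys - i) = ps ys (length ys) - ps ys i"
proof -
  assume i: "i \<le> length ys"
  have "take (length ys - i) (rev ys) = rev (drop i ys)"
    using i by (simp add: take_rev)
  hence "ps (rev ys) (length ys - i) = sum_list (map val (drop i ys))"
    by (simp add: ps_def sum_list_val_rev)
  moreover have "ps ys (length ys) = ps ys i + sum_list (map val (drop i ys))"
  proof -
    have "ys = take i ys @ drop i ys" by simp
    hence "sum_list (map val ys) = sum_list (map val (take i ys)) + sum_list (map val (drop i ys))"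
      by (metis map_append sum_list_append)
    thus ?thesis by (simp add: ps_def)
  qed
  ultimately show ?thesis by simp
qed

lemma newk_rev: "newk ys \<longleftrightarrow> (\<forall>j\<in>{1..length ys}. ps (rev ys) j \<noteq> 0)"
proof -
  let ?k = "length ys"
  have "newk ys \<longleftrightarrow> (\<forall>i\<in>{0..<?k}. ps ys ?k \<noteq> ps ys i)"
    unfolding newk_def by auto
  also have "\<dots> \<longleftrightarrow> (\<forall>i\<in>{0..<?k}. ps (rev ys) (?k - i) \<noteq> 0)"
    using ps_rev by auto
  also have "\<dots> \<longleftrightarrow> (\<forall>j\<in>{1..?k}. ps (rev ys) j \<noteq> 0)"
  proof
    assume h: "\<forall>i\<in>{0..<?k}. ps (rev ys) (?k - i) \<noteq> 0"
    show "\<forall>j\<in>{1..?k}. ps (rev ys) j \<noteq> 0"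
    proof
      fix j assume j: "j \<in> {1..?k}"
      hence "?k - j \<in> {0..<?k}" by auto
      with h have "ps (rev ys) (?k - (?k - j)) \<noteq> 0" by blast
      thus "ps (rev ys) j \<noteq> 0" using j by simp
    qed
  next
    assume h: "\<forall>j\<in>{1..?k}. ps (rev ys) j \<noteq> 0"
    show "\<forall>i\<in>{0..<?k}. ps (rev ys) (?k - i) \<noteq> 0"
    proof
      fix i assume i: "i \<in> {0..<?k}"
      hence "?k - i \<in> {1..?k}" by auto
      with h show "ps (rev ys) (?k - i) \<noteq> 0" by blast
    qed
  qed
  finally show ?thesis .
qed

lemma newk_sum: "(\<Sum>ys\<in>LL k. wt a ys * (if newk ys then 1 else 0))
    = (\<Sum>ys\<in>LL k. wt a ys * (if (\<forall>j\<in>{1..k}. ps ys j \<noteq> 0) then 1 else 0))"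
proof -
  have "(\<Sum>ys\<in>LL k. wt a ys * (if newk ys then 1 else 0))
      = (\<Sum>ys\<in>LL k. wt a (rev ys) * (if (\<forall>j\<in>{1..k}. ps (rev ys) j \<noteq> 0) then 1 else 0))"
    by (intro sum.cong refl) (simp add: newk_rev wt_rev LL_def)
  also have "\<dots> = (\<Sum>ys\<in>LL k. wt a ys * (if (\<forall>j\<in>{1..k}. ps ys j \<noteq> 0) then 1 else 0))"
    by (rule sum_LL_bij[symmetric, of rev]) auto
  finally show ?thesis .
qed

lemma Sv_repr: "Sv a h d m = (\<Sum>zs\<in>LL m. wtd a d zs * (if (\<forall>j\<le>m. h + ps zs j > 0) then 1 else 0))"
proof (induction m arbitrary: h d)
  case 0 thus ?case by (simp add: LL_0)
next
  case (Suc m)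
  have cond: "(\<forall>j\<le>Suc m. h + ps (y # zs) j > 0) \<longleftrightarrow> h > 0 \<and> (\<forall>j\<le>m. (h + val y) + ps zs j > 0)" for y zs
  proof
    assume H: "\<forall>j\<le>Suc m. h + ps (y # zs) j > 0"
    have "h > 0" using H[rule_format, of 0] by simp
    moreover have "\<forall>j\<le>m. (h + val y) + ps zs j > 0"
      using H ps_Cons_Suc by (metis Suc_le_mono add.assoc)
    ultimately show "h > 0 \<and> (\<forall>j\<le>m. (h + val y) + ps zs j > 0)" by blast
  next
    assume H: "h > 0 \<and> (\<forall>j\<le>m. (h + val y) + ps zs j > 0)"
    show "\<forall>j\<le>Suc m. h + ps (y # zs) j > 0"
    proof (intro allI impI)
      fix j assume j: "j \<le> Suc m"
      show "h + ps (y # zs) j > 0"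
      proof (cases j)
        case 0 thus ?thesis using H by simp
      next
        case (Suc i)
        hence "i \<le> m" using j by simp
        thus ?thesis using H Suc by (simp add: ps_Cons_Suc add.assoc)
      qed
    qed
  qed
  show ?case
  proof (cases "h > 0")
    case False
    hence "Sv a h d (Suc m) = 0" by simp
    moreover have "(\<Sum>zs\<in>LL (Suc m). wtd a d zs * (if (\<forall>j\<le>Suc m. h + ps zs j > 0) then 1 else 0)) = 0"
    proof (rule sum.neutral, rule ballI)
      fix zs assume "zs \<in> LL (Suc m)"
      have "\<not> (h + ps zs 0 > 0)" using False by simp
      thus "wtd a d zs * (if (\<forall>j\<le>Suc m. h + ps zs j > 0) then 1 else 0) = 0" by auto
    qed
    ultimately show ?thesis by simp
  next
    case True
    have "(\<Sum>zs\<in>LL (Suc m). wtd a d zs * (if (\<forall>j\<le>Suc m. h + ps zs j > 0) then 1 else 0))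
        = pw a d True * (\<Sum>zs\<in>LL m. wtd a True zs * (if (\<forall>j\<le>m. (h + 1) + ps zs j > 0) then 1 else 0))
        + pw a d False * (\<Sum>zs\<in>LL m. wtd a False zs * (if (\<forall>j\<le>m. (h - 1) + ps zs j > 0) then 1 else 0))"
      unfolding sum_LL_Suc cond using True
      by (simp add: sum.distrib sum_distrib_left val_def algebra_simps)
    also have "\<dots> = Sv a h d (Suc m)" using True by (simp add: Suc.IH)
    finally show ?thesis ..
  qed
qed

lemma discrete_pos:
  assumes "length zs = m" "\<forall>j\<le>m. 1 + ps zs j \<noteq> 0"
  shows "\<forall>j\<le>m. 1 + ps zs j > 0"
proof (intro allI impI)
  fix j assume "j \<le> m"
  thus "1 + ps zs j > 0"
  proof (induction j)
    case 0 thus ?case by simp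
  next
    case (Suc j)
    have "j < length zs" using Suc.prems assms(1) by simp
    hence e: "ps zs (Suc j) = ps zs j + val (zs ! j)" by (rule ps_Suc)
    have "1 + ps zs j > 0" using Suc by simp
    moreover have "1 + ps zs (Suc j) \<noteq> 0" using assms(2) Suc.prems by blast
    ultimately show ?case using e val_cases[of "zs ! j"] by auto
  qed
qed

lemma ps_map_Not: "ps (map Not zs) j = - ps zs j"
proof (induction zs arbitrary: j)
  case Nil thus ?case by (simp add: ps_def)
next
  case (Cons y zs)
  thus ?case by (cases j) (simp_all add: ps_Cons_Suc val_def)
qed

lemma wtd_map_Not: "wtd a (\<not> d) (map Not zs) = wtd a d zs"
  by (induction zs arbitrary: d) (auto simp: pw_def)

lemma first_split:
  "(\<Sum>ys\<in>LL (Suc m). wt a ys * (if (\<forall>j\<in>{1..Suc m}. ps ys j \<noteq> 0) then 1 else 0)) = Sv a 1 True m"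
proof -
  have pT: "(\<forall>j\<in>{1..Suc m}. ps (True # zs) j \<noteq> 0) \<longleftrightarrow> (\<forall>j\<le>m. 1 + ps zs j > 0)" if "zs \<in> LL m" for zs
  proof -
    have "(\<forall>j\<in>{1..Suc m}. ps (True # zs) j \<noteq> 0) \<longleftrightarrow> (\<forall>j\<le>m. 1 + ps zs j \<noteq> 0)"
    proof
      assume H: "\<forall>j\<in>{1..Suc m}. ps (True # zs) j \<noteq> 0"
      show "\<forall>j\<le>m. 1 + ps zs j \<noteq> 0"
      proof (intro allI impI)
        fix j assume "j \<le> m"
        hence "Suc j \<in> {1..Suc m}" by simp
        with H show "1 + ps zs j \<noteq> 0" by (metis ps_Cons_Suc val_def)
      qed
    next
      assume H: "\<forall>j\<le>m. 1 + ps zs j \<noteq> 0"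
      show "\<forall>j\<in>{1..Suc m}. ps (True # zs) j \<noteq> 0"
      proof
        fix j assume j: "j \<in> {1..Suc m}"
        then obtain i where i: "j = Suc i" "i \<le> m" by (cases j) auto
        thus "ps (True # zs) j \<noteq> 0" using H by (simp add: ps_Cons_Suc val_def)
      qed
    qed
    also have "\<dots> \<longleftrightarrow> (\<forall>j\<le>m. 1 + ps zs j > 0)"
      using discrete_pos[of zs m] that by (auto simp: LL_def)
    finally show ?thesis .
  qed
  have pF: "(\<forall>j\<in>{1..Suc m}. ps (False # zs) j \<noteq> 0) \<longleftrightarrow> (\<forall>j\<in>{1..Suc m}. ps (True # map Not zs) j \<noteq> 0)" for zs
  proof -
    have "ps (True # map Not zs) j = - ps (False # zs) j" for j
      by (cases j) (simp_all add: ps_Cons_Suc ps_map_Not val_def)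
    thus ?thesis by simp
  qed
  have "(\<Sum>ys\<in>LL (Suc m). wt a ys * (if (\<forall>j\<in>{1..Suc m}. ps ys j \<noteq> 0) then 1 else 0))
      = 1/2 * (\<Sum>zs\<in>LL m. wtd a True zs * (if (\<forall>j\<le>m. 1 + ps zs j > 0) then 1 else 0))
      + 1/2 * (\<Sum>zs\<in>LL m. wtd a True (map Not zs) * (if (\<forall>j\<le>m. 1 + ps (map Not zs) j > 0) then 1 else 0))"
  proof -
    have "(\<Sum>ys\<in>LL (Suc m). wt a ys * (if (\<forall>j\<in>{1..Suc m}. ps ys j \<noteq> 0) then 1 else 0))
       = (\<Sum>zs\<in>LL m. 1/2 * (wtd a True zs * (if (\<forall>j\<le>m. 1 + ps zs j > 0) then 1 else 0))
          + 1/2 * (wtd a True (map Not zs) * (if (\<forall>j\<le>m. 1 + ps (map Not zs) j > 0) then 1 else 0)))"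
      unfolding sum_LL_Suc
    proof (intro sum.cong refl)
      fix zs assume zs: "zs \<in> LL m"
      have mz: "map Not zs \<in> LL m" using zs by (simp add: LL_def)
      have w: "wtd a False zs = wtd a True (map Not zs)" using wtd_map_Not[of a True "map Not zs"] by (simp add: comp_def)
      show "wt a (True # zs) * (if (\<forall>j\<in>{1..Suc m}. ps (True # zs) j \<noteq> 0) then 1 else 0)
          + wt a (False # zs) * (if (\<forall>j\<in>{1..Suc m}. ps (False # zs) j \<noteq> 0) then 1 else 0)
          = 1/2 * (wtd a True zs * (if (\<forall>j\<le>m. 1 + ps zs j > 0) then 1 else 0))
          + 1/2 * (wtd a True (map Not zs) * (if (\<forall>j\<le>m. 1 + ps (map Not zs) j > 0) then 1 else 0))"
        by (simp only: pT[OF zs] pF pT[OF mz] w wt.simps mult.assoc)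
    qed
    thus ?thesis by (simp add: sum.distrib sum_distrib_left)
  qed
  also have "(\<Sum>zs\<in>LL m. wtd a True (map Not zs) * (if (\<forall>j\<le>m. 1 + ps (map Not zs) j > 0) then 1 else 0))
      = (\<Sum>zs\<in>LL m. wtd a True zs * (if (\<forall>j\<le>m. 1 + ps zs j > 0) then 1 else 0))"
    by (rule sum_LL_bij[symmetric, of "map Not"]) (auto simp: comp_def)
  also have "(\<Sum>zs\<in>LL m. wtd a True zs * (if (\<forall>j\<le>m. 1 + ps zs j > 0) then 1 else 0)) = Sv a 1 True m"
    by (simp add: Sv_repr)
  finally show ?thesis by simp
qed

theorem expected_range_comb:
  "(\<Sum>xs\<in>LL n. wt a xs * real (card (psums xs))) = 1 + CC a n"
proof -
  have "(\<Sum>xs\<in>LL n. wt a xs * real (card (psums xs))) = 1 + (\<Sum>k\<in>{1..n}. \<Sum>ys\<in>LL k. wt a ys * (if newk ys then 1 else 0))"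
    by (rule expected_card)
  also have "(\<Sum>k\<in>{1..n}. \<Sum>ys\<in>LL k. wt a ys * (if newk ys then 1 else 0)) = (\<Sum>k\<in>{1..n}. Sv a 1 True (k - 1))"
  proof (intro sum.cong refl)
    fix k assume "k \<in> {1..n}"
    then obtain m where k: "k = Suc m" by (cases k) auto
    show "(\<Sum>ys\<in>LL k. wt a ys * (if newk ys then 1 else 0)) = Sv a 1 True (k - 1)"
      unfolding newk_sum k using first_split by simp
  qed
  finally show ?thesis by (simp add: CC_def)
qed


unbundle no vec_syntax
unbundle fps_syntax

locale prw = prob_space M for M :: "'a measure" +
  fixes X :: "nat \<Rightarrow> 'a \<Rightarrow> int" and \<alpha> :: real
  assumes a0: "0 < \<alpha>" and a1: "\<alpha> < 1"
    and meas: "\<And>i. i \<ge> 1 \<Longrightarrow> X i \<in> M \<rightarrow>\<^sub>M count_space UNIV"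
    and pm1: "\<And>i \<omega>. i \<ge> 1 \<Longrightarrow> \<omega> \<in> space M \<Longrightarrow> X i \<omega> \<in> {-1, 1}"
    and first_plus: "measure M {\<omega> \<in> space M. X 1 \<omega> = 1} = 1/2"
    and first_minus: "measure M {\<omega> \<in> space M. X 1 \<omega> = -1} = 1/2"
    and persist: "\<And>i (x :: nat \<Rightarrow> int). i \<ge> 2 \<Longrightarrow>
        measure M {\<omega> \<in> space M. (\<forall>j\<in>{1..<i}. X j \<omega> = x j) \<and> X i \<omega> = x (i - 1)}
          = \<alpha> * measure M {\<omega> \<in> space M. \<forall>j\<in>{1..<i}. X j \<omega> = x j}"
    and flip: "\<And>i (x :: nat \<Rightarrow> int). i \<ge> 2 \<Longrightarrow>
        measure M {\<omega> \<in> space M. (\<forall>j\<in>{1..<i}. X j \<omega> = x j) \<and> X i \<omega> = - x (i - 1)}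
          = (1 - \<alpha>) * measure M {\<omega> \<in> space M. \<forall>j\<in>{1..<i}. X j \<omega> = x j}"
begin

definition cyl :: "bool list \<Rightarrow> 'a set" where
  "cyl xs = {\<omega> \<in> space M. \<forall>j\<in>{1..length xs}. X j \<omega> = val (xs ! (j - 1))}"

definition word :: "nat \<Rightarrow> 'a \<Rightarrow> bool list" where
  "word n \<omega> = map (\<lambda>j. X (Suc j) \<omega> = 1) [0..<n]"

lemma cyl_Nil: "cyl [] = space M" by (auto simp: cyl_def)

lemma cyl_snoc: "cyl (xs @ [y]) = {\<omega> \<in> space M. (\<forall>j\<in>{1..<Suc (length xs)}. X j \<omega> = val ((xs @ [y]) ! (j - 1))) \<and> X (Suc (length xs)) \<omega> = val y}"
proof -
  have "{1..length (xs @ [y])} = insert (Suc (length xs)) {1..<Suc (length xs)}" by auto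
  thus ?thesis unfolding cyl_def by auto
qed

lemma cyl_prefix: "{\<omega> \<in> space M. \<forall>j\<in>{1..<Suc (length xs)}. X j \<omega> = val ((xs @ [y]) ! (j - 1))} = cyl xs"
proof -
  have "\<forall>j\<in>{1..<Suc (length xs)}. (xs @ [y]) ! (j - 1) = xs ! (j - 1)"
    by (auto simp: nth_append)
  moreover have "{1..<Suc (length xs)} = {1..length xs}" by auto
  ultimately show ?thesis unfolding cyl_def by auto
qed

lemma Xset_sets: "i \<ge> 1 \<Longrightarrow> {\<omega> \<in> space M. X i \<omega> = c} \<in> sets M"
proof -
  assume i: "i \<ge> 1"
  have "X i -` {c} \<inter> space M \<in> sets M" using measurable_sets[OF meas[OF i], of "{c}"] by simp
  moreover have "X i -` {c} \<inter> space M = {\<omega> \<in> space M. X i \<omega> = c}" by auto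
  ultimately show ?thesis by simp
qed

lemma cyl_sets: "cyl xs \<in> sets M"
proof (induction xs rule: rev_induct)
  case Nil thus ?case by (simp add: cyl_Nil)
next
  case (snoc y xs)
  have "cyl (xs @ [y]) = {\<omega> \<in> space M. \<forall>j\<in>{1..<Suc (length xs)}. X j \<omega> = val ((xs @ [y]) ! (j - 1))} \<inter> {\<omega> \<in> space M. X (Suc (length xs)) \<omega> = val y}"
    unfolding cyl_snoc by auto
  hence "cyl (xs @ [y]) = cyl xs \<inter> {\<omega> \<in> space M. X (Suc (length xs)) \<omega> = val y}"
    unfolding cyl_prefix .
  thus ?case using snoc Xset_sets by auto
qed

lemma val_pm: "i \<ge> 1 \<Longrightarrow> \<omega> \<in> space M \<Longrightarrow> X i \<omega> = val b \<longleftrightarrow> b = (X i \<omega> = 1)"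
  using pm1[of i \<omega>] by (auto simp: val_def)

lemma cyl_measure: "measure M (cyl xs) = wt \<alpha> xs"
proof (induction xs rule: rev_induct)
  case Nil thus ?case by (simp add: cyl_Nil prob_space)
next
  case (snoc y xs)
  show ?case
  proof (cases "xs = []")
    case True
    have "cyl [y] = {\<omega> \<in> space M. X 1 \<omega> = val y}" by (auto simp: cyl_def)
    thus ?thesis using True first_plus first_minus by (cases y) (simp_all add: val_def)
  next
    case False
    define n where "n = length xs"
    have n1: "n \<ge> 1" using False by (cases xs) (auto simp: n_def)
    define x where "x j = val ((xs @ [y]) ! (j - 1))" for j
    have xl: "x (Suc n - 1) = val (last xs)"
      using False by (simp add: x_def n_def nth_append last_conv_nth)
    have base: "{\<omega> \<in> space M. \<forall>j\<in>{1..<Suc n}. X j \<omega> = x j} = cyl xs"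
      unfolding x_def n_def by (rule cyl_prefix)
    have cs: "cyl (xs @ [y]) = {\<omega> \<in> space M. (\<forall>j\<in>{1..<Suc n}. X j \<omega> = x j) \<and> X (Suc n) \<omega> = val y}"
      unfolding cyl_snoc x_def n_def ..
    have i2: "Suc n \<ge> 2" using n1 by simp
    show ?thesis
    proof (cases "y = last xs")
      case True
      hence "val y = x (Suc n - 1)" using xl by simp
      hence "measure M (cyl (xs @ [y])) = \<alpha> * measure M (cyl xs)"
        unfolding cs base[symmetric] using persist[OF i2, of x] by simp
      also have "\<dots> = wt \<alpha> (xs @ [y])" using snoc False True by (simp add: wt_snoc pw_def)
      finally show ?thesis .
    next
      case F: False
      hence "val y = - x (Suc n - 1)" using xl by (cases y) (auto simp: val_def)
      hence "measure M (cyl (xs @ [y])) = (1 - \<alpha>) * measure M (cyl xs)"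
        unfolding cs base[symmetric] using flip[OF i2, of x] by simp
      also have "\<dots> = wt \<alpha> (xs @ [y])" using snoc False F by (simp add: wt_snoc pw_def)
      finally show ?thesis .
    qed
  qed
qed

lemma word_LL: "word n \<omega> \<in> LL n" by (simp add: word_def LL_def)

lemma in_cyl_iff: "\<omega> \<in> space M \<Longrightarrow> xs \<in> LL n \<Longrightarrow> \<omega> \<in> cyl xs \<longleftrightarrow> xs = word n \<omega>"
proof -
  assume \<omega>: "\<omega> \<in> space M" and xs: "xs \<in> LL n"
  have len: "length xs = n" using xs by (simp add: LL_def)
  have "\<omega> \<in> cyl xs \<longleftrightarrow> (\<forall>j\<in>{1..n}. xs ! (j - 1) = (X j \<omega> = 1))"
    unfolding cyl_def using \<omega> val_pm len by auto
  also have "\<dots> \<longleftrightarrow> (\<forall>i<n. xs ! i = (X (Suc i) \<omega> = 1))"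
  proof
    assume h: "\<forall>j\<in>{1..n}. xs ! (j - 1) = (X j \<omega> = 1)"
    show "\<forall>i<n. xs ! i = (X (Suc i) \<omega> = 1)"
    proof (intro allI impI)
      fix i assume "i < n"
      hence "Suc i \<in> {1..n}" by simp
      with h show "xs ! i = (X (Suc i) \<omega> = 1)" by fastforce
    qed
  next
    assume h: "\<forall>i<n. xs ! i = (X (Suc i) \<omega> = 1)"
    show "\<forall>j\<in>{1..n}. xs ! (j - 1) = (X j \<omega> = 1)"
    proof
      fix j assume j: "j \<in> {1..n}"
      hence "j - 1 < n" "Suc (j - 1) = j" by auto
      with h show "xs ! (j - 1) = (X j \<omega> = 1)" by metis
    qed
  qed
  also have "\<dots> \<longleftrightarrow> xs = word n \<omega>"
    unfolding word_def using len by (auto simp: list_eq_iff_nth_eq)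
  finally show ?thesis .
qed

lemma walk_sum_word: "\<omega> \<in> space M \<Longrightarrow> j \<le> n \<Longrightarrow> walk_sum X j \<omega> = ps (word n \<omega>) j"
proof -
  assume \<omega>: "\<omega> \<in> space M" and j: "j \<le> n"
  have vx: "val (X (Suc i) \<omega> = 1) = X (Suc i) \<omega>" for i
    using pm1[of "Suc i" \<omega>] \<omega> by (auto simp: val_def)
  have "ps (word n \<omega>) j = sum_list (map (val \<circ> (\<lambda>j. X (Suc j) \<omega> = 1)) [0..<j])"
    using j by (simp add: ps_def word_def take_map min_def)
  also have "\<dots> = sum_list (map (\<lambda>i. X (Suc i) \<omega>) [0..<j])"
    by (simp add: comp_def vx)
  also have "\<dots> = (\<Sum>i\<in>{0..<j}. X (Suc i) \<omega>)"
    by (simp add: interv_sum_list_conv_sum_set_nat)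
  also have "\<dots> = (\<Sum>i\<in>{1..j}. X i \<omega>)"
  proof -
    have "(\<Sum>i\<in>{1..j}. X i \<omega>) = (\<Sum>i\<in>{Suc 0..<Suc j}. X i \<omega>)"
      by (intro sum.cong) auto
    also have "\<dots> = (\<Sum>i\<in>{0..<j}. X (Suc i) \<omega>)" by (rule sum.shift_bounds_Suc_ivl)
    finally show ?thesis by simp
  qed
  finally show ?thesis by (simp add: walk_sum_def)
qed

lemma walk_range_word: "\<omega> \<in> space M \<Longrightarrow> walk_range X n \<omega> = int (card (psums (word n \<omega>)))"
proof -
  assume \<omega>: "\<omega> \<in> space M"
  have "(\<lambda>j. walk_sum X j \<omega>) ` {0..n} = psums (word n \<omega>)"
    unfolding psums_def using walk_sum_word[OF \<omega>] by (auto simp: word_def intro!: image_cong)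
  thus ?thesis unfolding walk_range_def using range_card by simp
qed

lemma expectation_sum:
  "integral\<^sup>L M (\<lambda>\<omega>. real_of_int (walk_range X n \<omega>)) = (\<Sum>xs\<in>LL n. wt \<alpha> xs * real (card (psums xs)))"
proof -
  have "integral\<^sup>L M (\<lambda>\<omega>. real_of_int (walk_range X n \<omega>))
      = integral\<^sup>L M (\<lambda>\<omega>. \<Sum>xs\<in>LL n. indicator (cyl xs) \<omega> * real (card (psums xs)))"
  proof (rule Bochner_Integration.integral_cong[OF refl])
    fix \<omega> assume \<omega>: "\<omega> \<in> space M"
    have "(\<Sum>xs\<in>LL n. indicator (cyl xs) \<omega> * real (card (psums xs)))
        = (\<Sum>xs\<in>LL n. (if xs = word n \<omega> then real (card (psums xs)) else 0))"
      by (intro sum.cong refl) (auto simp: indicator_def in_cyl_iff[OF \<omega>])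
    also have "\<dots> = real (card (psums (word n \<omega>)))"
      using word_LL[of n \<omega>] by (simp add: sum.delta')
    finally show "real_of_int (walk_range X n \<omega>) = (\<Sum>xs\<in>LL n. indicator (cyl xs) \<omega> * real (card (psums xs)))"
      using walk_range_word[OF \<omega>] by simp
  qed
  also have "\<dots> = (\<Sum>xs\<in>LL n. integral\<^sup>L M (\<lambda>\<omega>. indicator (cyl xs) \<omega> * real (card (psums xs))))"
    by (rule Bochner_Integration.integral_sum) (auto intro!: integrable_mult_left integrable_real_indicator cyl_sets simp: less_top[symmetric] emeasure_finite)
  also have "\<dots> = (\<Sum>xs\<in>LL n. wt \<alpha> xs * real (card (psums xs)))"
  proof (intro sum.cong refl)
    fix xs
    have "integral\<^sup>L M (\<lambda>\<omega>. indicator (cyl xs) \<omega> * real (card (psums xs))) = measure M (cyl xs) * real (card (psums xs))"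
      using cyl_sets[of xs] sets.sets_into_space[OF cyl_sets[of xs]]
      by (subst Bochner_Integration.integral_mult_left) (auto intro!: integrable_real_indicator simp: Int_absorb2 less_top[symmetric] emeasure_finite)
    thus "integral\<^sup>L M (\<lambda>\<omega>. indicator (cyl xs) \<omega> * real (card (psums xs))) = wt \<alpha> xs * real (card (psums xs))"
      by (simp add: cyl_measure)
  qed
  finally show ?thesis .
qed

lemma expectation_CC: "integral\<^sup>L M (\<lambda>\<omega>. real_of_int (walk_range X n \<omega>)) = 1 + CC \<alpha> n"
  unfolding expectation_sum by (rule expected_range_comb)

end


theorem theorem3:
  fixes M :: "'a measure" and X :: "nat \<Rightarrow> 'a \<Rightarrow> int" and \<alpha> :: real
  assumes "prob_space M"
    and "0 < \<alpha>" and "\<alpha> < 1"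
    and meas: "\<And>i. i \<ge> 1 \<Longrightarrow> X i \<in> M \<rightarrow>\<^sub>M count_space UNIV"
    and pm1: "\<And>i \<omega>. i \<ge> 1 \<Longrightarrow> \<omega> \<in> space M \<Longrightarrow> X i \<omega> \<in> {-1, 1}"
    and first_plus: "measure M {\<omega> \<in> space M. X 1 \<omega> = 1} = 1/2"
    and first_minus: "measure M {\<omega> \<in> space M. X 1 \<omega> = -1} = 1/2"
    and persist: "\<And>i (x :: nat \<Rightarrow> int). i \<ge> 2 \<Longrightarrow>
        measure M {\<omega> \<in> space M. (\<forall>j\<in>{1..<i}. X j \<omega> = x j) \<and> X i \<omega> = x (i - 1)}
          = \<alpha> * measure M {\<omega> \<in> space M. \<forall>j\<in>{1..<i}. X j \<omega> = x j}"
    and flip: "\<And>i (x :: nat \<Rightarrow> int). i \<ge> 2 \<Longrightarrow>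
        measure M {\<omega> \<in> space M. (\<forall>j\<in>{1..<i}. X j \<omega> = x j) \<and> X i \<omega> = - x (i - 1)}
          = (1 - \<alpha>) * measure M {\<omega> \<in> space M. \<forall>j\<in>{1..<i}. X j \<omega> = x j}"
  shows "(\<lambda>n. integral\<^sup>L M (\<lambda>\<omega>. real_of_int (walk_range X n \<omega>)))
           \<sim>[at_top] (\<lambda>n. sqrt (8 * real n * \<alpha> / (pi * (1 - \<alpha>))))"
proof -
  have L: "prw M X \<alpha>"
    using assms by (intro prw.intro prw_axioms.intro) assumption+
  interpret prw M X \<alpha> by (rule L)
  have lim: "(\<lambda>n. CC \<alpha> n / sqrt (real n)) \<longlonglongrightarrow> sqrt (8 * (1 - (1 - \<alpha>)) / (pi * (1 - \<alpha>)))"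
  proof (rule analytic_main[where r = "2 * \<alpha> - 1" and P = "PP \<alpha>"])
    show "0 < 1 - \<alpha>" "1 - \<alpha> < 1" using assms(2,3) by auto
    show "2 * \<alpha> - 1 = 1 - 2 * (1 - \<alpha>)" by simp
    show "PP \<alpha> * PP \<alpha> = (1 - fps_X^2) * (1 - fps_const ((2 * \<alpha> - 1)^2) * fps_X^2)" by (rule PP_sq)
    show "fps_nth (PP \<alpha>) 0 = 1" by (rule PP_0)
    show "(1 - fps_X)^2 * (fps_const (2 * (1 - \<alpha>)) * Abs_fps (CC \<alpha>)) = PP \<alpha> - (1 + fps_const (2 * \<alpha> - 1) * fps_X) * (1 - fps_X)"
      by (rule CC_fps)
    show "\<And>n. 0 \<le> CC \<alpha> n" using assms(2,3) by (intro CC_nonneg) auto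
  qed
  define K where "K = sqrt (8 * \<alpha> / (pi * (1 - \<alpha>)))"
  have K0: "K > 0" unfolding K_def using assms(2,3) by (intro real_sqrt_gt_zero divide_pos_pos mult_pos_pos) auto
  have "1 - (1 - \<alpha>) = \<alpha>" by simp
  hence lim': "(\<lambda>n. CC \<alpha> n / sqrt (real n)) \<longlonglongrightarrow> K" using lim unfolding K_def by simp
  have inv: "(\<lambda>n. 1 / sqrt (real n)) \<longlonglongrightarrow> 0" by real_asymp
  have lim2: "(\<lambda>n. (1 / sqrt (real n) + CC \<alpha> n / sqrt (real n)) / K) \<longlonglongrightarrow> (0 + K) / K"
    by (intro tendsto_intros inv lim') (use K0 in auto)
  have ev: "eventually (\<lambda>n. (1 / sqrt (real n) + CC \<alpha> n / sqrt (real n)) / K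
      = integral\<^sup>L M (\<lambda>\<omega>. real_of_int (walk_range X n \<omega>)) / sqrt (8 * real n * \<alpha> / (pi * (1 - \<alpha>)))) sequentially"
    using eventually_gt_at_top[of "0::nat"]
  proof eventually_elim
    case (elim n)
    have a: "8 * real n * \<alpha> / (pi * (1 - \<alpha>)) = real n * (8 * \<alpha> / (pi * (1 - \<alpha>)))"
      by simp
    have e1: "sqrt (8 * real n * \<alpha> / (pi * (1 - \<alpha>))) = sqrt (real n) * K"
      unfolding K_def a by (rule real_sqrt_mult)
    show ?case
      by (simp only: e1 expectation_CC add_divide_distrib[symmetric] divide_divide_eq_left)
  qed
  have "(\<lambda>n. integral\<^sup>L M (\<lambda>\<omega>. real_of_int (walk_range X n \<omega>)) / sqrt (8 * real n * \<alpha> / (pi * (1 - \<alpha>)))) \<longlonglongrightarrow> 1"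
    using Lim_transform_eventually[OF lim2 ev] K0 by simp
  thus ?thesis by (rule asymp_equivI')
qed


end
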